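(* The point $C_2=C_2(u)=\left(-\frac{a^2+b^2}{2a}\cos u,-\frac{a^2+b^2}{2b}\sin u\right)$ lies on $\mathcal{E}$ if and only if it equals one of the four points $$W=\frac{1}{2\sqrt{a^2+b^2}}\left(\pm a\sqrt{a^2+3b^2},\;\pm b\sqrt{3a^2+b^2}\right)$$ (all sign combinations). Moreover, whenever $C_2\in\mathcal{E}$, $C_2$ coincides with one of the points $P_1,P_2,P_3$.
   Context: Let $a>b>0$. Let $\mathcal{E}$ be the ellipse $x^2/a^2+y^2/b^2=1$, parametrized by $P(t)=(a\cos t,b\sin t)$. For $u\in\mathbb{R}$ let $M=(a\cos u,b\sin u)$, and for $i=1,2,3$ let $t_i=-u/3-2\pi(i-1)/3$ and $P_i=P(t_i)$ (the pre-images of the cusps of the negative pedal curve of $\mathcal{E}$ with respect to $M$). $C_2$ is the area centroid of that negative pedal curve. *)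

theory Defs
  imports Complex_Main
begin

definition on_ellipse :: "real \<Rightarrow> real \<Rightarrow> real \<times> real \<Rightarrow> bool" where
  "on_ellipse a b p \<longleftrightarrow> (fst p)^2 / a^2 + (snd p)^2 / b^2 = 1"

definition ellP :: "real \<Rightarrow> real \<Rightarrow> real \<Rightarrow> real \<times> real" where
  "ellP a b t = (a * cos t, b * sin t)"

text \<open>Cusp pre-image parameters t_i = -u/3 - 2 pi (i-1)/3, i = 1,2,3.\<close>
definition cusp_param :: "real \<Rightarrow> nat \<Rightarrow> real" where
  "cusp_param u i = - u / 3 - 2 * pi * (real i - 1) / 3"

text \<open>Area centroid C_2 of the negative pedal curve, as given by its closed form.\<close>
definition C2 :: "real \<Rightarrow> real \<Rightarrow> real \<Rightarrow> real \<times> real" where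
  "C2 a b u = (- (a^2 + b^2) / (2 * a) * cos u, - (a^2 + b^2) / (2 * b) * sin u)"

definition W_points :: "real \<Rightarrow> real \<Rightarrow> (real \<times> real) set" where
  "W_points a b = {(sx * a * sqrt (a^2 + 3 * b^2) / (2 * sqrt (a^2 + b^2)),
                     sy * b * sqrt (3 * a^2 + b^2) / (2 * sqrt (a^2 + b^2))) | sx sy.
                     sx \<in> {1, -1} \<and> sy \<in> {1, -1}}"

end

theory Submission
  imports Defs "HOL-Analysis.Analysis"
begin

lemma cos_shift_int: "cos (x + real_of_int m * (2*pi)) = cos x"
  using cos.plus_of_int[of x m] by simp

lemma sin_shift_int: "sin (x + real_of_int m * (2*pi)) = sin x"
  using sin.plus_of_int[of x m] by simp

lemma sin_treble: "sin (3 * (x::real)) = 3 * sin x - 4 * sin x ^ 3"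
proof -
  have "sin (3*x) = sin (2*x + x)" by simp
  also have "\<dots> = sin (2*x) * cos x + cos (2*x) * sin x" by (rule sin_add)
  also have "\<dots> = 2* sin x* cos x^2 + (1 - 2* sin x^2) * sin x"
    by (simp add: sin_double cos_double_sin power2_eq_square)
  also have "\<dots> = 3 * sin x - 4 * sin x ^ 3"
    by (subst cos_squared_eq) (simp add: power3_eq_cube power2_eq_square algebra_simps)
  finally show ?thesis .
qed

lemma cusp_cos:
  fixes u \<theta> :: real
  assumes "cos (3*\<theta>) = cos u"
  shows "\<exists>i\<in>{1,2,3::nat}. cos (cusp_param u i) = cos \<theta>"
proof -
  from assms obtain n where n: "n \<in> \<int>" and h: "3*\<theta> = u + 2*n*pi \<or> 3*\<theta> = -u + 2*n*pi"
    using cos_eq by blast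
  from n obtain N :: int where N: "n = of_int N" using Ints_cases by blast
  show ?thesis
  proof (cases "3*\<theta> = u + 2*n*pi")
    case True
    define r where "r = N mod 3"
    define m where "m = N div 3"
    have Nr: "N = 3*m + r" unfolding r_def m_def by simp
    have r3: "r \<in> {0,1,2}" unfolding r_def by auto
    have th: "\<theta> = (u/3 + 2*pi * of_int r/3) + of_int m * (2*pi)"
      using True N Nr by (simp add: field_simps)
    have "cos \<theta> = cos (u/3 + 2*pi * of_int r/3)" using th cos_shift_int by metis
    also have "\<dots> = cos (cusp_param u (nat r + 1))"
    proof -
      have "real (nat r + 1) - 1 = of_int r" using r3 by auto
      then have "cusp_param u (nat r + 1) = - (u/3 + 2*pi * of_int r/3)"
        unfolding cusp_param_def by (simp add: field_simps)
      then show ?thesis by (metis cos_minus)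
    qed
    finally show ?thesis using r3 by (intro bexI[of _ "nat r + 1"]) auto
  next
    case False
    with h have F: "3*\<theta> = -u + 2*n*pi" by blast
    define r where "r = (-N) mod 3"
    define m where "m = (-N) div 3"
    have Nr: "-N = 3*m + r" unfolding r_def m_def by simp
    have r3: "r \<in> {0,1,2}" unfolding r_def by auto
    have th: "\<theta> = (-u/3 - 2*pi * of_int r/3) + of_int (-m) * (2*pi)"
    proof -
      have "real_of_int (-N) = 3*m + r" using Nr by (metis of_int_add of_int_mult of_int_numeral)
      then have e: "real_of_int N = - (of_int r + 3 * of_int m)" by simp
      have "3*\<theta> = -u - 2*pi * of_int r - 6*pi * of_int m" using F N e by (simp add: algebra_simps)
      then show ?thesis by (simp add: field_simps)
    qed
    have "cos \<theta> = cos (-u/3 - 2*pi * of_int r/3)" using th cos_shift_int by metis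
    also have "\<dots> = cos (cusp_param u (nat r + 1))"
    proof -
      have "real (nat r + 1) - 1 = of_int r" using r3 by auto
      then have "cusp_param u (nat r + 1) = -u/3 - 2*pi * of_int r/3"
        unfolding cusp_param_def by (simp add: field_simps)
      then show ?thesis by simp
    qed
    finally show ?thesis using r3 by (intro bexI[of _ "nat r + 1"]) auto
  qed
qed


lemma cancel4: "(S::real) \<noteq> 0 \<Longrightarrow> S*(Q/(4*S)) = Q/4" by simp

lemma cancel5: "(S::real) \<noteq> 0 \<Longrightarrow> S^2/4 - Q/(4*S) = (S^3 - Q)/(4*S)"
  by (simp add: field_simps power2_eq_square power3_eq_cube)

lemma W_iff:
  fixes a b :: real
  assumes "a > 0" "b > 0"
  shows "p \<in> W_points a b \<longleftrightarrow>
     (fst p)^2 = a^2*(a^2+3*b^2)/(4*(a^2+b^2)) \<and> (snd p)^2 = b^2*(3*a^2+b^2)/(4*(a^2+b^2))"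
proof -
  define A where "A = a * sqrt (a^2 + 3 * b^2) / (2 * sqrt (a^2 + b^2))"
  define B where "B = b * sqrt (3 * a^2 + b^2) / (2 * sqrt (a^2 + b^2))"
  have S: "a^2+b^2 > 0" using assms by (intro add_pos_pos) simp_all
  have A2: "A^2 = a^2*(a^2+3*b^2)/(4*(a^2+b^2))"
    unfolding A_def using S by (simp add: power_divide power_mult_distrib)
  have B2: "B^2 = b^2*(3*a^2+b^2)/(4*(a^2+b^2))"
    unfolding B_def using S by (simp add: power_divide power_mult_distrib)
  have W: "W_points a b = {(sx * A, sy * B) | sx sy. sx \<in> {1, -1} \<and> sy \<in> {1, -1}}"
    unfolding W_points_def A_def B_def by (simp add: mult.assoc times_divide_eq_right)
  have "p \<in> W_points a b \<longleftrightarrow> ((fst p = A \<or> fst p = -A) \<and> (snd p = B \<or> snd p = -B))"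
  proof
    assume "p \<in> W_points a b"
    then obtain sx sy where "sx \<in> {1,-1}" "sy \<in> {1,-1}" "p = (sx*A, sy*B)" unfolding W by blast
    then show "(fst p = A \<or> fst p = -A) \<and> (snd p = B \<or> snd p = -B)" by auto
  next
    assume h: "(fst p = A \<or> fst p = -A) \<and> (snd p = B \<or> snd p = -B)"
    obtain sx where sx: "sx \<in> {1,-1::real}" "fst p = sx*A" using h by (metis insertCI mult_1 mult_minus1)
    obtain sy where sy: "sy \<in> {1,-1::real}" "snd p = sy*B" using h by (metis insertCI mult_1 mult_minus1)
    have "p = (sx*A, sy*B)" using sx sy by (simp add: prod_eq_iff)
    then show "p \<in> W_points a b" unfolding W using sx sy by blast
  qed
  also have "\<dots> \<longleftrightarrow> (fst p)^2 = A^2 \<and> (snd p)^2 = B^2"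
    by (simp add: power2_eq_iff)
  finally show ?thesis using A2 B2 by simp
qed

lemma solve2:
  fixes a b X Y :: real
  assumes "a > b" "b > 0"
    and e1: "X / a^2 + Y / b^2 = 1" and e2: "a^2 * X + b^2 * Y = (a^2+b^2)^2/4"
  shows "X = a^2*(a^2+3*b^2)/(4*(a^2+b^2)) \<and> Y = b^2*(3*a^2+b^2)/(4*(a^2+b^2))"
proof -
  have a0: "a > 0" using assms by simp
  have e1': "b^2 * X + a^2 * Y = a^2*b^2" using e1 a0 assms(2) by (simp add: field_simps)
  have d: "a^4 - b^4 \<noteq> 0"
  proof -
    have "b^4 < a^4" using assms by (simp add: power_strict_mono)
    then show ?thesis by simp
  qed
  have "(a^4 - b^4) * X = a^2 * ((a^2+b^2)^2/4 - b^4)"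
  proof -
    have "(a^4 - b^4) * X = a^2*(a^2*X + b^2*Y) - b^2*(b^2*X + a^2*Y)" by (simp add: algebra_simps power2_eq_square power4_eq_xxxx)
    also have "\<dots> = a^2*((a^2+b^2)^2/4) - b^2*(a^2*b^2)" by (simp only: e1' e2)
    also have "\<dots> = a^2 * ((a^2+b^2)^2/4 - b^4)" by (simp add: algebra_simps power2_eq_square power4_eq_xxxx)
    finally show ?thesis .
  qed
  moreover have "(a^4 - b^4) * (a^2*(a^2+3*b^2)/(4*(a^2+b^2))) = a^2 * ((a^2+b^2)^2/4 - b^4)"
  proof -
    have S0: "a^2+b^2 \<noteq> 0" using a0 assms(2) by (metis add_pos_pos zero_less_power less_irrefl)
    have f1: "a^4-b^4 = (a^2-b^2)*(a^2+b^2)" by (simp add: algebra_simps power2_eq_square power4_eq_xxxx)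
    have f2: "(a^2+b^2)^2/4 - b^4 = (a^2-b^2)*(a^2+3*b^2)/4" by (simp add: algebra_simps power2_eq_square power4_eq_xxxx)
    have c: "(a^2+b^2) * (a^2*(a^2+3*b^2)/(4*(a^2+b^2))) = a^2*(a^2+3*b^2)/4" by (rule cancel4[OF S0])
    have "(a^2-b^2)*(a^2+b^2) * (a^2*(a^2+3*b^2)/(4*(a^2+b^2))) = (a^2-b^2)*((a^2+b^2) * (a^2*(a^2+3*b^2)/(4*(a^2+b^2))))"
      by (simp only: mult.assoc)
    also have "\<dots> = a^2 * ((a^2-b^2)*(a^2+3*b^2)/4)" unfolding c by simp
    finally show ?thesis unfolding f1 f2 .
  qed
  ultimately have X: "X = a^2*(a^2+3*b^2)/(4*(a^2+b^2))" using d
    by (metis mult_left_cancel)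
  have "b^2 * Y = (a^2+b^2)^2/4 - a^2 * X" using e2 by simp
  also have "\<dots> = b^2 * (b^2*(3*a^2+b^2)/(4*(a^2+b^2)))"
  proof -
    have S0: "a^2+b^2 \<noteq> 0" using a0 assms(2) by (metis add_pos_pos zero_less_power less_irrefl)
    have "(a^2+b^2)^2/4 - a^2 * (a^2*(a^2+3*b^2)/(4*(a^2+b^2))) = ((a^2+b^2)^3 - a^4*(a^2+3*b^2))/(4*(a^2+b^2))"
    proof -
      have "a^2 * (a^2*(a^2+3*b^2)/(4*(a^2+b^2))) = (a^4*(a^2+3*b^2))/(4*(a^2+b^2))"
        by (simp add: power4_eq_xxxx power2_eq_square)
      then show ?thesis using cancel5[OF S0] by simp
    qed
    also have "(a^2+b^2)^3 - a^4*(a^2+3*b^2) = b^2*(b^2*(3*a^2+b^2))"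
      by (simp add: algebra_simps power2_eq_square power3_eq_cube power4_eq_xxxx)
    finally show ?thesis unfolding X by simp
  qed
  finally have "b^2 * Y = b^2 * (b^2*(3*a^2+b^2)/(4*(a^2+b^2)))" .
  moreover have "b^2 \<noteq> 0" using assms(2) by simp
  ultimately have "Y = b^2*(3*a^2+b^2)/(4*(a^2+b^2))" using mult_left_cancel by blast
  with X show ?thesis by simp
qed


theorem proposition6p1:
  fixes a b u :: real
  assumes "a > b" and "b > 0"
  shows "(on_ellipse a b (C2 a b u) \<longleftrightarrow> C2 a b u \<in> W_points a b)
    \<and> (on_ellipse a b (C2 a b u) \<longrightarrow>
         (\<exists>i\<in>{1, 2, 3}. C2 a b u = ellP a b (cusp_param u i)))"
proof -
  have a0: "a > 0" using assms by simp
  have b0: "b > 0" by (rule assms(2))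
  define S where "S = a^2 + b^2"
  have S0: "S > 0" unfolding S_def using a0 b0 by (intro add_pos_pos) simp_all
  define c where "c = cos u"
  define s where "s = sin u"
  have cs: "c^2 + s^2 = 1" unfolding c_def s_def by (simp add: add.commute)
  define X where "X = (fst (C2 a b u))^2"
  define Y where "Y = (snd (C2 a b u))^2"
  have Xd: "X = S^2 * c^2 / (4*a^2)" unfolding X_def C2_def S_def c_def
    by (simp add: power_mult_distrib power_divide) (simp add: power2_eq_square algebra_simps)
  have Yd: "Y = S^2 * s^2 / (4*b^2)" unfolding Y_def C2_def S_def s_def
    by (simp add: power_mult_distrib power_divide) (simp add: power2_eq_square algebra_simps)
  have e2: "a^2 * X + b^2 * Y = (a^2+b^2)^2/4"
  proof -
    have "a^2 * X + b^2 * Y = S^2 * (c^2 + s^2) / 4" unfolding Xd Yd using a0 b0 by (simp add: field_simps)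
    then show ?thesis using cs S_def by simp
  qed
  have ell: "on_ellipse a b (C2 a b u) \<longleftrightarrow> X / a^2 + Y / b^2 = 1"
    unfolding on_ellipse_def X_def Y_def ..
  have XW: "on_ellipse a b (C2 a b u) \<longleftrightarrow>
      X = a^2*(a^2+3*b^2)/(4*(a^2+b^2)) \<and> Y = b^2*(3*a^2+b^2)/(4*(a^2+b^2))"
  proof
    assume "on_ellipse a b (C2 a b u)"
    then show "X = a^2*(a^2+3*b^2)/(4*(a^2+b^2)) \<and> Y = b^2*(3*a^2+b^2)/(4*(a^2+b^2))"
      using solve2[OF assms _ e2] ell by blast
  next
    assume h: "X = a^2*(a^2+3*b^2)/(4*(a^2+b^2)) \<and> Y = b^2*(3*a^2+b^2)/(4*(a^2+b^2))"
    have hx: "X / a^2 = (a^2+3*b^2)/(4*S)" using h a0 unfolding S_def by simp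
    have hy: "Y / b^2 = (3*a^2+b^2)/(4*S)" using h b0 unfolding S_def by simp
    have "X / a^2 + Y / b^2 = ((a^2+3*b^2) + (3*a^2+b^2))/(4*S)"
      unfolding hx hy by (simp add: add_divide_distrib)
    also have "(a^2+3*b^2) + (3*a^2+b^2) = 4*S" unfolding S_def by simp
    also have "4*S/(4*S) = 1" using S0 by simp
    finally show "on_ellipse a b (C2 a b u)" using ell by simp
  qed
  have part1: "on_ellipse a b (C2 a b u) \<longleftrightarrow> C2 a b u \<in> W_points a b"
    unfolding XW W_iff[OF a0 b0] X_def Y_def ..
  have part2: "\<exists>i\<in>{1, 2, 3}. C2 a b u = ellP a b (cusp_param u i)"
    if on: "on_ellipse a b (C2 a b u)"
  proof -
    define T where "T = (a^2+3*b^2)/(4*S)"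
    have XT: "X = a^2 * T" using on XW unfolding T_def S_def by simp
    have c2: "c^2 = 4 * a^4 * T / S^2"
    proof -
      have "S^2 * c^2 / (4*a^2) = a^2 * T" using XT Xd by simp
      then show ?thesis using a0 S0 by (simp add: field_simps power4_eq_xxxx power2_eq_square)
    qed
    have T0: "T \<ge> 0" unfolding T_def using S0 by simp
    have q1: "a^2+3*b^2 = 3*S - 2*a^2" unfolding S_def by simp
    have q2: "a^2+3*b^2 = S + 2*b^2" unfolding S_def by simp
    have bS: "2*b^2 \<le> 3*S" unfolding S_def by simp
    have T1: "T \<le> 1" unfolding T_def q2 using S0 bS by (simp add: field_simps)
    have f3: "4*T - 3 = -2*a^2/S" unfolding T_def q1 using S0 by (simp add: field_simps)
    have f1: "4*T - 1 = 2*b^2/S" unfolding T_def q2 using S0 by (simp add: field_simps)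
    define g0 where "g0 = sqrt T"
    have g02: "g0^2 = T" unfolding g0_def using T0 by simp
    have "(g0*(4*T-3))^2 = c^2"
      unfolding c2 f3 using g02 S0 by (simp add: power_mult_distrib power_divide power4_eq_xxxx power2_eq_square field_simps)
    then have "g0*(4*T-3) = c \<or> g0*(4*T-3) = -c" by (simp add: power2_eq_iff)
    then obtain g where g2: "g^2 = T" and gc: "g*(4*T-3) = c"
      using g02 by (metis minus_mult_left power2_minus minus_minus)
    have gb: "-1 \<le> g \<and> g \<le> 1" using g2 T1 T0
      by (metis abs_le_iff abs_square_le_1 minus_le_iff)
    define th where "th = arccos g"
    have cth: "cos th = g" unfolding th_def using gb arccos by blast
    have "cos (3*th) = c" unfolding cos_treble_cos cth using gc g2
      by (simp add: power3_eq_cube power2_eq_square algebra_simps)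
    then obtain i where i: "i \<in> {1,2,3::nat}" and ci: "cos (cusp_param u i) = g"
      using cusp_cos[of th u] cth unfolding c_def by auto
    define t where "t = cusp_param u i"
    have ct: "cos t = g" using ci t_def by simp
    have st2: "sin t ^2 = 1 - T" using g2 ct sin_squared_eq[of t] by simp
    have s3: "sin (3*t) = - s"
    proof -
      have "3*t = -u + real_of_int (- (int i - 1)) * (2*pi)"
        unfolding t_def cusp_param_def using i by (auto simp: field_simps)
      then have "sin (3*t) = sin (-u)" using sin_shift_int by metis
      then show ?thesis unfolding s_def by simp
    qed
    have "sin (3*t) = sin t * (4*T - 1)"
    proof -
      have "sin t ^ 3 = sin t * sin t ^ 2" by (simp add: power3_eq_cube power2_eq_square)
      then have "sin t ^ 3 = sin t * (1 - T)" using st2 by simp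
      then show ?thesis unfolding sin_treble by (simp add: algebra_simps)
    qed
    then have sv: "s = - sin t * (2*b^2/S)" using s3 f1 by simp
    have cv: "c = - g * (2*a^2/S)" using gc f3 by simp
    have "C2 a b u = ellP a b t"
      unfolding C2_def ellP_def prod_eq_iff fst_conv snd_conv
      using sv cv ct S0 a0 b0 unfolding c_def s_def S_def
      by (simp add: field_simps power2_eq_square)
    then show ?thesis using i t_def by blast
  qed
  show ?thesis using part1 part2 by blast
qed

end
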